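(* The Cesàro operator $\mathcal C: VH(\mathbb D)\to VH(\mathbb D)$ is not compact, i.e. there is no $0$-neighbourhood $U$ in $VH(\mathbb D)$ such that $\mathcal C(U)$ is relatively compact in $VH(\mathbb D)$.
   Context: $\mathbb D$ is the open unit disc. Define $v(z)=1$ if $|z|\le 1-1/e$ and $v(z)=(-\log(1-|z|))^{-1}$ if $1-1/e\le|z|<1$, $v_k=v^k$, $H^\infty_{v_k}=\{f \text{ analytic on }\mathbb D:\sup_{z\in\mathbb D}v_k(z)|f(z)|<\infty\}$ normed by this sup, and $VH(\mathbb D)=\bigcup_kH^\infty_{v_k}$ with the finest locally convex topology making all inclusions continuous. The Cesàro operator is $\mathcal C f(z)=\frac1z\int_0^z\frac{f(\zeta)}{1-\zeta}\,d\zeta$ for $z\neq0$, $\mathcal Cf(0)=f(0)$. *)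

theory Defs
  imports "HOL-Complex_Analysis.Complex_Analysis"
begin

definition vw :: "complex \<Rightarrow> real" where
  "vw z = (if norm z \<le> 1 - 1 / exp 1 then 1 else inverse (- ln (1 - norm z)))"

text \<open>Functions on the disc are represented as functions complex => complex that
  vanish outside the open unit disc (so that equality is equality on the disc).\<close>
definition Hv :: "nat \<Rightarrow> (complex \<Rightarrow> complex) set" where
  "Hv k = {f. f holomorphic_on ball 0 1 \<and> (\<forall>z. z \<notin> ball 0 1 \<longrightarrow> f z = 0)
            \<and> bdd_above ((\<lambda>z. vw z ^ k * norm (f z)) ` ball 0 1)}"

definition Hv_norm :: "nat \<Rightarrow> (complex \<Rightarrow> complex) \<Rightarrow> real" where
  "Hv_norm k f = (SUP z\<in>ball 0 1. vw z ^ k * norm (f z))"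

definition VH :: "(complex \<Rightarrow> complex) set" where
  "VH = (\<Union>k. Hv k)"

text \<open>Basic 0-neighbourhoods of the locally convex inductive limit: absolutely convex
  subsets of VH whose trace on every step H_{v_k} contains a ball.\<close>
definition VH_basic_nbhd :: "(complex \<Rightarrow> complex) set \<Rightarrow> bool" where
  "VH_basic_nbhd W \<longleftrightarrow> W \<subseteq> VH \<and>
     (\<forall>x\<in>W. \<forall>y\<in>W. \<forall>a b :: complex. norm a + norm b \<le> 1 \<longrightarrow> (\<lambda>z. a * x z + b * y z) \<in> W) \<and>
     (\<forall>k. \<exists>\<epsilon>>0. {g \<in> Hv k. Hv_norm k g < \<epsilon>} \<subseteq> W)"

definition VH_open :: "(complex \<Rightarrow> complex) set \<Rightarrow> bool" where
  "VH_open S \<longleftrightarrow> S \<subseteq> VH \<and> (\<forall>f\<in>S. \<exists>W. VH_basic_nbhd W \<and> (\<lambda>g. (\<lambda>z. f z + g z)) ` W \<subseteq> S)"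

lemma VH_basic_nbhd_Int:
  assumes "VH_basic_nbhd W1" "VH_basic_nbhd W2"
  shows "VH_basic_nbhd (W1 \<inter> W2)"
proof -
  have "\<exists>\<epsilon>>0. {g \<in> Hv k. Hv_norm k g < \<epsilon>} \<subseteq> W1 \<inter> W2" for k
  proof -
    obtain e1 where "e1 > 0" "{g \<in> Hv k. Hv_norm k g < e1} \<subseteq> W1"
      using assms(1) unfolding VH_basic_nbhd_def by blast
    moreover obtain e2 where "e2 > 0" "{g \<in> Hv k. Hv_norm k g < e2} \<subseteq> W2"
      using assms(2) unfolding VH_basic_nbhd_def by blast
    ultimately show ?thesis
      by (intro exI[of _ "min e1 e2"]) auto
  qed
  thus ?thesis using assms unfolding VH_basic_nbhd_def by blast
qed

lemma istopology_VH_open: "istopology VH_open"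
  unfolding istopology_def
proof safe
  fix S T assume S: "VH_open S" and T: "VH_open T"
  show "VH_open (S \<inter> T)"
    unfolding VH_open_def
  proof safe
    fix x assume "x \<in> S" then show "x \<in> VH" using S unfolding VH_open_def by blast
  next
    fix f assume f: "f \<in> S" "f \<in> T"
    obtain W1 where "VH_basic_nbhd W1" "(\<lambda>g z. f z + g z) ` W1 \<subseteq> S"
      using S f unfolding VH_open_def by blast
    moreover obtain W2 where "VH_basic_nbhd W2" "(\<lambda>g z. f z + g z) ` W2 \<subseteq> T"
      using T f unfolding VH_open_def by blast
    ultimately show "\<exists>W. VH_basic_nbhd W \<and> (\<lambda>g z. f z + g z) ` W \<subseteq> S \<inter> T"
      by (intro exI[of _ "W1 \<inter> W2"]) (auto intro: VH_basic_nbhd_Int)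
  qed
next
  fix K assume K: "\<forall>S\<in>K. VH_open S"
  show "VH_open (\<Union>K)"
    unfolding VH_open_def
  proof safe
    fix x S assume "x \<in> S" "S \<in> K" then show "x \<in> VH" using K unfolding VH_open_def by blast
  next
    fix f S assume "f \<in> S" "S \<in> K"
    then obtain W where "VH_basic_nbhd W" "(\<lambda>g z. f z + g z) ` W \<subseteq> S"
      using K unfolding VH_open_def by blast
    with \<open>S \<in> K\<close> show "\<exists>W. VH_basic_nbhd W \<and> (\<lambda>g z. f z + g z) ` W \<subseteq> \<Union>K" by blast
  qed
qed

definition VH_top :: "(complex \<Rightarrow> complex) topology" where
  "VH_top = topology VH_open"

lemma openin_VH_top: "openin VH_top S \<longleftrightarrow> VH_open S"
  unfolding VH_top_def using istopology_VH_open by (simp add: topology_inverse')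

definition cesaro :: "(complex \<Rightarrow> complex) \<Rightarrow> (complex \<Rightarrow> complex)" where
  "cesaro f z = (if z \<notin> ball 0 1 then 0 else if z = 0 then f 0
                 else contour_integral (linepath 0 z) (\<lambda>\<zeta>. f \<zeta> / (1 - \<zeta>)) / z)"

definition VH_zero_nbhd :: "(complex \<Rightarrow> complex) set \<Rightarrow> bool" where
  "VH_zero_nbhd U \<longleftrightarrow> (\<exists>S. openin VH_top S \<and> (\<lambda>z. 0) \<in> S \<and> S \<subseteq> U)"

end

theory Submission
  imports Defs
begin

lemma one_minus_notin: assumes "z \<in> ball (0::complex) 1" shows "1 - z \<notin> \<real>\<^sub>\<le>\<^sub>0"
proof -
  have "Re z < 1" using assms complex_Re_le_cmod[of z] by (auto simp: dist_norm)
  hence "Re (1 - z) > 0" by simp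
  thus ?thesis by (auto simp: complex_nonpos_Reals_iff)
qed

lemma norm_Ln_bound: assumes "w \<noteq> 0" shows "norm (Ln w) \<le> \<bar>ln (norm w)\<bar> + pi"
proof -
  have "norm (Ln w) \<le> \<bar>Re (Ln w)\<bar> + \<bar>Im (Ln w)\<bar>" by (rule cmod_le)
  moreover have "Re (Ln w) = ln (norm w)" using assms by (simp add: Re_Ln)
  moreover have "\<bar>Im (Ln w)\<bar> \<le> pi" using assms mpi_less_Im_Ln[of w] Im_Ln_le_pi[of w] by auto
  ultimately show ?thesis by linarith
qed

lemma vw_pos: assumes "z \<in> ball (0::complex) 1" shows "0 < vw z" "vw z \<le> 1"
proof -
  have n: "norm z < 1" using assms by (simp add: dist_norm)
  { assume h: "\<not> norm z \<le> 1 - 1 / exp 1"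
    hence "1 - norm z < exp (-1)" by (simp add: exp_minus field_simps)
    hence "ln (1 - norm z) < -1" using n by (metis ln_exp ln_less_cancel_iff diff_gt_0_iff_gt exp_gt_zero)
    hence "1 < - ln (1 - norm z)" by simp
    hence "0 < inverse (- ln (1 - norm z)) \<and> inverse (- ln (1 - norm z)) \<le> 1"
      by (metis inverse_le_1_iff inverse_positive_iff_positive less_le_not_le order_less_trans zero_less_one) }
  thus "0 < vw z" "vw z \<le> 1" unfolding vw_def by auto
qed

lemma vw_Ln_bound: assumes "z \<in> ball (0::complex) 1" shows "vw z * norm (Ln (1 - z)) \<le> 6"
proof -
  have n: "norm z < 1" using assms by (simp add: dist_norm)
  define L where "L = - ln (1 - norm z)"
  have L0: "L \<ge> 0" unfolding L_def using n by (simp add: ln_le_zero_iff)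
  have nz: "1 - z \<noteq> 0" using n by auto
  have lo: "1 - norm z \<le> norm (1 - z)" using norm_triangle_ineq2[of 1 z] by simp
  have hi: "norm (1 - z) \<le> 2" using norm_triangle_ineq4[of 1 z] n by simp
  have "ln (1 - norm z) \<le> ln (norm (1 - z))" using lo n by (intro ln_mono) auto
  hence "ln (norm (1 - z)) \<ge> - L" unfolding L_def by simp
  moreover have "ln (norm (1 - z)) \<le> 1"
    using ln_le_minus_one[of "norm (1-z)"] hi nz by simp
  ultimately have a: "\<bar>ln (norm (1 - z))\<bar> \<le> L + 1" using L0 by linarith
  have b: "norm (Ln (1 - z)) \<le> L + 5" using norm_Ln_bound[OF nz] a pi_less_4 by linarith
  show ?thesis
  proof (cases "norm z \<le> 1 - 1 / exp 1")
    case True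
    hence "1 - norm z \<ge> exp (-1)" by (simp add: exp_minus field_simps)
    hence "L \<le> 1" unfolding L_def using n
      by (metis ln_exp ln_le_cancel_iff exp_gt_zero minus_le_iff order_less_le_trans)
    thus ?thesis using b True by (simp add: vw_def)
  next
    case False
    hence "1 - norm z < exp (-1)" by (simp add: exp_minus field_simps)
    hence "ln (1 - norm z) < -1" using n by (metis ln_exp ln_less_cancel_iff diff_gt_0_iff_gt exp_gt_zero)
    hence L1: "L > 1" unfolding L_def by simp
    have "vw z = inverse L" using False by (simp add: vw_def L_def)
    hence "vw z * norm (Ln (1 - z)) \<le> inverse L * (L + 5)" using b L1 by (simp add: mult_left_mono)
    also have "\<dots> = 1 + 5 / L" using L1 by (simp add: field_simps)
    also have "\<dots> \<le> 6" using L1 by (simp add: field_simps)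
    finally show ?thesis .
  qed
qed

lemma norm_mul_Ln_bound: assumes "z \<in> ball (0::complex) 1" shows "norm (1 - z) * norm (Ln (1 - z)) \<le> 10"
proof -
  have n: "norm z < 1" using assms by (simp add: dist_norm)
  have nz: "1 - z \<noteq> 0" using n by auto
  define x where "x = norm (1 - z)"
  have x0: "x > 0" using nz by (simp add: x_def)
  have hi: "x \<le> 2" using norm_triangle_ineq4[of 1 z] n by (simp add: x_def)
  have "x * \<bar>ln x\<bar> \<le> 2"
  proof (cases "x \<le> 1")
    case True
    have "ln (1/x) \<le> 1/x - 1" using ln_le_minus_one[of "1/x"] x0 by simp
    hence "- ln x \<le> 1/x" using x0 by (simp add: ln_div)
    hence "x * (- ln x) \<le> 1" using x0 by (simp add: field_simps)
    moreover have "ln x \<le> 0" using True x0 by simp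
    ultimately show ?thesis by (simp add: abs_if)
  next
    case False
    have "ln x \<le> x - 1" using ln_le_minus_one x0 by simp
    hence "ln x \<le> 1" using hi by simp
    moreover have "ln x \<ge> 0" using False by simp
    ultimately have "x * \<bar>ln x\<bar> \<le> 2 * 1" using hi by (intro mult_mono) auto
    thus ?thesis by simp
  qed
  moreover have "x * norm (Ln (1 - z)) \<le> x * (\<bar>ln x\<bar> + pi)"
    using norm_Ln_bound[OF nz] x0 by (simp add: x_def)
  moreover have "x * pi \<le> 2 * 4" using hi pi_less_4 x0 by (intro mult_mono) auto
  ultimately show ?thesis by (simp add: x_def[symmetric] algebra_simps)
qed

definition Lf :: "complex \<Rightarrow> complex" where "Lf z = - Ln (1 - z)"

definition gfun :: "complex \<Rightarrow> nat \<Rightarrow> complex \<Rightarrow> complex" where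
  "gfun c N z = (if z \<in> ball 0 1 then c * ((1 - z) * Lf z ^ Suc N + of_nat (Suc N) * z * Lf z ^ N) else 0)"

definition Gfun :: "complex \<Rightarrow> nat \<Rightarrow> complex \<Rightarrow> complex" where
  "Gfun c N z = (if z \<in> ball 0 1 then c * Lf z ^ Suc N else 0)"

lemma Lf_deriv: assumes "z \<in> ball (0::complex) 1" shows "(Lf has_field_derivative inverse (1 - z)) (at z)"
proof -
  have "((\<lambda>z. - Ln (1 - z)) has_field_derivative - (inverse (1 - z) * (0 - 1))) (at z)"
    by (intro derivative_intros has_field_derivative_Ln[THEN DERIV_chain2] one_minus_notin[OF assms])
  thus ?thesis unfolding Lf_def[abs_def] by simp
qed

lemma Phi_deriv: assumes "z \<in> ball (0::complex) 1"
  shows "((\<lambda>z. c * z * Lf z ^ Suc N) has_field_derivative gfun c N z / (1 - z)) (at z)"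
proof -
  have nz: "1 - z \<noteq> 0" using assms by (auto simp: dist_norm)
  have "((\<lambda>z. c * z * Lf z ^ Suc N) has_field_derivative
      c * (1 * Lf z ^ Suc N + z * (of_nat (Suc N) * Lf z ^ N * inverse (1 - z)))) (at z)"
  proof -
    have d1: "((\<lambda>z. Lf z ^ Suc N) has_field_derivative (of_nat (Suc N) * Lf z ^ N * inverse (1 - z))) (at z)"
      using DERIV_power[OF Lf_deriv[OF assms], of "Suc N"] by (simp add: mult_ac del: power_Suc)
    have "((\<lambda>z. c * z * Lf z ^ Suc N) has_field_derivative
      (c * 1) * Lf z ^ Suc N + (of_nat (Suc N) * Lf z ^ N * inverse (1 - z)) * (c * z)) (at z)"
      by (rule DERIV_mult[OF DERIV_cmult[OF DERIV_ident] d1])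
    moreover have "(c * 1) * Lf z ^ Suc N + (of_nat (Suc N) * Lf z ^ N * inverse (1 - z)) * (c * z)
       = c * (1 * Lf z ^ Suc N + z * (of_nat (Suc N) * Lf z ^ N * inverse (1 - z)))"
      by (simp add: algebra_simps)
    ultimately show ?thesis by simp
  qed
  moreover have "c * (1 * Lf z ^ Suc N + z * (of_nat (Suc N) * Lf z ^ N * inverse (1 - z))) = gfun c N z / (1 - z)"
    using assms nz by (simp add: gfun_def field_simps)
  ultimately show ?thesis by simp
qed

lemma Lf_0 [simp]: "Lf 0 = 0" by (simp add: Lf_def)

lemma cesaro_gfun: "cesaro (gfun c N) = Gfun c N"
proof
  fix z
  show "cesaro (gfun c N) z = Gfun c N z"
  proof (cases "z \<in> ball 0 1")
    case False thus ?thesis by (simp add: cesaro_def Gfun_def)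
  next
    case zin: True
    show ?thesis
    proof (cases "z = 0")
      case True thus ?thesis by (simp add: cesaro_def Gfun_def gfun_def)
    next
      case False
      have "((\<lambda>w. gfun c N w / (1 - w)) has_contour_integral
              ((\<lambda>z. c * z * Lf z ^ Suc N) (pathfinish (linepath 0 z)) - (\<lambda>z. c * z * Lf z ^ Suc N) (pathstart (linepath 0 z)))) (linepath 0 z)"
      proof (rule contour_integral_primitive[where S = "ball 0 1"])
        show "\<And>x. x \<in> ball 0 1 \<Longrightarrow> ((\<lambda>z. c * z * Lf z ^ Suc N) has_field_derivative gfun c N x / (1 - x)) (at x within ball 0 1)"
          using Phi_deriv has_field_derivative_at_within by blast
        show "valid_path (linepath 0 z)" by simp
        show "path_image (linepath 0 z) \<subseteq> ball 0 1"
          using zin convex_ball[of "0::complex" 1] by (simp add: closed_segment_subset)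
      qed
      hence "contour_integral (linepath 0 z) (\<lambda>w. gfun c N w / (1 - w)) = c * z * Lf z ^ Suc N"
        by (simp add: contour_integral_unique)
      thus ?thesis using zin False by (simp add: cesaro_def Gfun_def)
    qed
  qed
qed

lemma Hv_iff: "f \<in> Hv k \<longleftrightarrow> f holomorphic_on ball 0 1 \<and> (\<forall>z. z \<notin> ball 0 1 \<longrightarrow> f z = 0) \<and>
   (\<exists>B. \<forall>z\<in>ball 0 1. vw z ^ k * norm (f z) \<le> B)"
  unfolding Hv_def bdd_above_def by auto

lemma Hv_norm_ge: "f \<in> Hv k \<Longrightarrow> z \<in> ball 0 1 \<Longrightarrow> vw z ^ k * norm (f z) \<le> Hv_norm k f"
  unfolding Hv_def Hv_norm_def by (auto intro: cSUP_upper)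

lemma Hv_norm_le: "(\<And>z. z \<in> ball 0 1 \<Longrightarrow> vw z ^ k * norm (f z) \<le> B) \<Longrightarrow> Hv_norm k f \<le> B"
  unfolding Hv_norm_def by (rule cSUP_least) auto

lemma Lf_holo: "Lf holomorphic_on ball 0 1"
proof -
  have "(\<lambda>z. - Ln (1 - z)) holomorphic_on ball 0 1"
  proof (intro holomorphic_on_minus holomorphic_on_Ln')
    show "\<And>z. z \<in> ball (0::complex) 1 \<Longrightarrow> 1 - z \<notin> \<real>\<^sub>\<le>\<^sub>0" by (rule one_minus_notin)
  qed (intro holomorphic_intros)
  thus ?thesis unfolding Lf_def[abs_def] .
qed

lemma vwL: assumes z: "z \<in> ball 0 1" shows "(vw z * norm (Lf z)) ^ n \<le> 6 ^ n"
proof (rule power_mono)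
  show "vw z * norm (Lf z) \<le> 6" using vw_Ln_bound[OF z] by (simp add: Lf_def)
  have "0 < vw z" by (rule vw_pos(1)[OF z])
  thus "0 \<le> vw z * norm (Lf z)" by simp
qed

lemma gfun_Hv: "gfun c N \<in> Hv N" "Hv_norm N (gfun c N) \<le> norm c * ((real N + 11) * 6 ^ N)"
proof -
  have b: "vw z ^ N * norm (gfun c N z) \<le> norm c * ((real N + 11) * 6 ^ N)" if z: "z \<in> ball 0 1" for z
  proof -
    define a where "a = vw z"
    define l where "l = norm (Lf z)"
    have a0: "a \<ge> 0" using vw_pos[OF z] by (simp add: a_def)
    have l0: "l \<ge> 0" by (simp add: l_def)
    have al: "(a * l) ^ N \<le> 6 ^ N" using vwL[OF z] by (simp add: a_def l_def)
    have zl: "norm (1 - z) * l \<le> 10" using norm_mul_Ln_bound[OF z] by (simp add: l_def Lf_def)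
    have nz: "norm z \<le> 1" using z by (simp add: dist_norm)
    have "norm ((1 - z) * Lf z ^ Suc N + of_nat (Suc N) * z * Lf z ^ N)
       \<le> norm ((1 - z) * Lf z ^ Suc N) + norm (of_nat (Suc N) * z * Lf z ^ N)" by (rule norm_triangle_ineq)
    also have "\<dots> = norm (1 - z) * l ^ Suc N + (real N + 1) * norm z * l ^ N"
    proof -
      have e: "norm (of_nat (Suc N) :: complex) = real N + 1" by (simp only: norm_of_nat)
      show ?thesis unfolding l_def norm_mult norm_power e by simp
    qed
    finally have "norm (gfun c N z) \<le> norm c * (norm (1 - z) * l ^ Suc N + (real N + 1) * norm z * l ^ N)"
      using z unfolding gfun_def by (simp add: norm_mult mult_left_mono del: power_Suc)
    hence "a ^ N * norm (gfun c N z) \<le> a ^ N * (norm c * (norm (1 - z) * l ^ Suc N + (real N + 1) * norm z * l ^ N))"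
      using a0 by (simp add: mult_left_mono)
    also have "\<dots> = norm c * ((norm (1 - z) * l) * (a * l) ^ N + (real N + 1) * norm z * (a * l) ^ N)"
      by (simp add: power_mult_distrib algebra_simps)
    also have "\<dots> \<le> norm c * (10 * 6 ^ N + (real N + 1) * 1 * 6 ^ N)"
      using al zl nz a0 l0
      by (intro mult_left_mono add_mono mult_mono) (auto intro: mult_nonneg_nonneg)
    also have "\<dots> = norm c * ((real N + 11) * 6 ^ N)" by (simp add: algebra_simps)
    finally show ?thesis by (simp add: a_def)
  qed
  have h: "gfun c N holomorphic_on ball 0 1"
  proof -
    have "(\<lambda>z. c * ((1 - z) * Lf z ^ Suc N + of_nat (Suc N) * z * Lf z ^ N)) holomorphic_on ball 0 1"
      by (intro holomorphic_intros Lf_holo)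
    thus ?thesis by (rule holomorphic_transform) (simp add: gfun_def)
  qed
  have "\<exists>B. \<forall>z\<in>ball 0 1. vw z ^ N * norm (gfun c N z) \<le> B" using b by blast
  moreover have "\<forall>z. z \<notin> ball 0 1 \<longrightarrow> gfun c N z = 0" by (simp add: gfun_def)
  ultimately show "gfun c N \<in> Hv N" unfolding Hv_iff using h by blast
  show "Hv_norm N (gfun c N) \<le> norm c * ((real N + 11) * 6 ^ N)" using b by (rule Hv_norm_le)
qed

lemma Gfun_Hv: "Gfun c N \<in> Hv (Suc N)"
proof -
  have b: "vw z ^ Suc N * norm (Gfun c N z) \<le> norm c * 6 ^ Suc N" if z: "z \<in> ball 0 1" for z
  proof -
    have "vw z ^ Suc N * norm (Gfun c N z) = norm c * (vw z * norm (Lf z)) ^ Suc N"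
      using z by (simp add: Gfun_def norm_mult norm_power power_mult_distrib)
    also have "\<dots> \<le> norm c * 6 ^ Suc N" by (rule mult_left_mono[OF vwL[OF z]]) simp
    finally show ?thesis .
  qed
  have h: "Gfun c N holomorphic_on ball 0 1"
  proof -
    have "(\<lambda>z. c * Lf z ^ Suc N) holomorphic_on ball 0 1"
      by (intro holomorphic_intros Lf_holo)
    thus ?thesis by (rule holomorphic_transform) (simp add: Gfun_def)
  qed
  have "\<exists>B. \<forall>z\<in>ball 0 1. vw z ^ Suc N * norm (Gfun c N z) \<le> B" using b by blast
  moreover have "\<forall>z. z \<notin> ball 0 1 \<longrightarrow> Gfun c N z = 0" by (simp add: Gfun_def)
  ultimately show ?thesis unfolding Hv_iff using h by blast
qed

lemma Hv_VH: "f \<in> Hv k \<Longrightarrow> f \<in> VH" unfolding VH_def by blast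

lemma VH_lin: assumes "x \<in> VH" "y \<in> VH" shows "(\<lambda>z. a * x z + b * y z) \<in> VH"
proof -
  obtain k1 k2 where x: "x \<in> Hv k1" and y: "y \<in> Hv k2" using assms unfolding VH_def by blast
  obtain B1 where B1: "\<forall>z\<in>ball 0 1. vw z ^ k1 * norm (x z) \<le> B1" using x unfolding Hv_iff by blast
  obtain B2 where B2: "\<forall>z\<in>ball 0 1. vw z ^ k2 * norm (y z) \<le> B2" using y unfolding Hv_iff by blast
  have "vw z ^ (k1 + k2) * norm (a * x z + b * y z) \<le> norm a * B1 + norm b * B2" if z: "z \<in> ball 0 1" for z
  proof -
    have v: "0 < vw z" "vw z \<le> 1" using vw_pos[OF z] by auto
    have p1: "vw z ^ (k1 + k2) \<le> vw z ^ k1" using v by (intro power_decreasing) auto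
    have p2: "vw z ^ (k1 + k2) \<le> vw z ^ k2" using v by (intro power_decreasing) auto
    have "vw z ^ (k1 + k2) * norm (a * x z + b * y z) \<le> vw z ^ (k1 + k2) * (norm a * norm (x z) + norm b * norm (y z))"
      using v by (intro mult_left_mono) (auto simp: norm_mult intro: norm_triangle_le)
    also have "\<dots> = norm a * (vw z ^ (k1 + k2) * norm (x z)) + norm b * (vw z ^ (k1 + k2) * norm (y z))"
      by (simp add: algebra_simps)
    also have "\<dots> \<le> norm a * (vw z ^ k1 * norm (x z)) + norm b * (vw z ^ k2 * norm (y z))"
      using p1 p2 by (intro add_mono mult_left_mono mult_right_mono) auto
    also have "\<dots> \<le> norm a * B1 + norm b * B2"
      using B1 B2 z by (intro add_mono mult_left_mono) auto
    finally show ?thesis .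
  qed
  moreover have "(\<lambda>z. a * x z + b * y z) holomorphic_on ball 0 1"
    using x y unfolding Hv_iff
    by (intro holomorphic_on_add holomorphic_on_mult holomorphic_on_const) auto
  moreover have "\<forall>z. z \<notin> ball 0 1 \<longrightarrow> a * x z + b * y z = 0" using x y unfolding Hv_iff by auto
  ultimately have "(\<lambda>z. a * x z + b * y z) \<in> Hv (k1 + k2)" unfolding Hv_iff by blast
  thus ?thesis by (rule Hv_VH)
qed

lemma VH_add: "x \<in> VH \<Longrightarrow> y \<in> VH \<Longrightarrow> (\<lambda>z. x z + y z) \<in> VH"
  using VH_lin[of x y 1 1] by simp

lemma topspace_VH: "topspace VH_top = VH"
proof
  show "topspace VH_top \<subseteq> VH" unfolding topspace_def openin_VH_top VH_open_def by blast
  have "VH_basic_nbhd VH" unfolding VH_basic_nbhd_def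
  proof (intro conjI ballI allI impI)
    fix k show "\<exists>\<epsilon>>0. {g \<in> Hv k. Hv_norm k g < \<epsilon>} \<subseteq> VH"
      by (rule exI[of _ 1]) (auto intro: Hv_VH)
  qed (auto intro: VH_lin)
  hence "VH_open VH" unfolding VH_open_def using VH_add by blast
  thus "VH \<subseteq> topspace VH_top" using openin_subset openin_VH_top
    by (metis openin_topspace topspace_def Union_upper mem_Collect_eq)
qed

lemma r_props: assumes T: "T \<ge> 2"
  shows "complex_of_real (1 - exp (-T)) \<in> ball 0 1"
    and "vw (complex_of_real (1 - exp (-T))) = inverse T"
    and "Lf (complex_of_real (1 - exp (-T))) = complex_of_real T"
proof -
  have e0: "0 < exp (-T)" by simp
  have e1: "exp (-T) < exp (-1)" using T by simp
  hence e1': "exp (-T) < 1" by (metis exp_less_one_iff neg_less_0_iff_less zero_less_one order_less_trans exp_less_cancel_iff)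
  have nx: "norm (complex_of_real (1 - exp (-T))) = 1 - exp (-T)" unfolding norm_of_real using e1' by simp
  show "complex_of_real (1 - exp (-T)) \<in> ball 0 1" unfolding mem_ball dist_0_norm nx using e0 by simp
  have e2: "exp (-T) < 1 / exp 1" using e1 by (simp add: exp_minus inverse_eq_divide)
  hence "\<not> (1 - exp (-T) \<le> 1 - 1 / exp 1)" by linarith
  thus "vw (complex_of_real (1 - exp (-T))) = inverse T" unfolding vw_def nx by simp
  have "1 - complex_of_real (1 - exp (-T)) = complex_of_real (exp (-T))" by simp
  moreover have "Ln (complex_of_real (exp (-T))) = complex_of_real (-T)"
    using Ln_of_real[OF e0] by simp
  ultimately show "Lf (complex_of_real (1 - exp (-T))) = complex_of_real T" by (simp add: Lf_def)
qed

lemma q_bound: assumes T: "\<forall>m. T m \<ge> (2::real)" and g: "g \<in> Hv k"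
  shows "norm (g (complex_of_real (1 - exp (- T m)))) / T m ^ m \<le> (1 + (\<Sum>j<k. T j ^ k)) * Hv_norm k g"
proof -
  define x where "x = complex_of_real (1 - exp (- T m))"
  define a where "a = norm (g x)"
  define M where "M = 1 + (\<Sum>j<k. T j ^ k)"
  have Tm: "T m \<ge> 2" using T by auto
  have xb: "x \<in> ball 0 1" "vw x = inverse (T m)" using r_props[OF Tm] by (auto simp: x_def)
  have "vw x ^ k * a \<le> Hv_norm k g" using Hv_norm_ge[OF g xb(1)] by (simp add: a_def)
  hence H: "a / T m ^ k \<le> Hv_norm k g" using xb(2) by (simp add: power_inverse divide_inverse mult.commute)
  have a0: "a \<ge> 0" by (simp add: a_def)
  have Tpos: "T m ^ n > 0" for n using Tm by simp
  have Tnn: "0 \<le> T j" for j using T[rule_format, of j] by linarith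
  have sum0: "(\<Sum>j<k. T j ^ k) \<ge> 0" by (intro sum_nonneg zero_le_power Tnn)
  have M1: "M \<ge> 1" using sum0 by (simp add: M_def)
  have key: "a / T m ^ m \<le> M * (a / T m ^ k)"
  proof (cases "k \<le> m")
    case True
    have "T m ^ k \<le> T m ^ m" using Tm True by (intro power_increasing) auto
    hence "a / T m ^ m \<le> a / T m ^ k" using a0 Tpos by (intro divide_left_mono) auto
    also have "\<dots> \<le> M * (a / T m ^ k)"
    proof -
      have "0 \<le> a / T m ^ k" using a0 Tpos[of k] by simp
      from mult_right_mono[OF M1 this] show ?thesis by simp
    qed
    finally show ?thesis .
  next
    case False
    have Tk: "T m ^ k \<le> M" unfolding M_def
    proof -
      have "T m ^ k \<le> (\<Sum>j<k. T j ^ k)"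
        using False by (intro member_le_sum[where f = "\<lambda>j. T j ^ k"] zero_le_power Tnn) auto
      thus "T m ^ k \<le> 1 + (\<Sum>j<k. T j ^ k)" by simp
    qed
    have "1 \<le> T m ^ m" using Tm by (intro one_le_power) auto
    hence "a / T m ^ m \<le> a" using a0 by (simp add: divide_le_eq mult_le_cancel_left1 mult.commute)
    also have "a = (a / T m ^ k) * T m ^ k" using Tm by simp
    also have "\<dots> \<le> (a / T m ^ k) * M" using Tk a0 Tpos[of k] by (intro mult_left_mono) (auto intro: divide_nonneg_pos)
    finally show ?thesis by (simp add: mult.commute)
  qed
  also have "\<dots> \<le> M * Hv_norm k g" using H M1 by (intro mult_left_mono) auto
  finally show ?thesis by (simp add: a_def x_def M_def)
qed

theorem corollary2p5:
  shows "\<not> (\<exists>U. U \<subseteq> VH \<and> VH_zero_nbhd U \<and>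
              compactin VH_top (VH_top closure_of (cesaro ` U)))"
proof
  assume "\<exists>U. U \<subseteq> VH \<and> VH_zero_nbhd U \<and> compactin VH_top (VH_top closure_of (cesaro ` U))"
  then obtain U where U0: "VH_zero_nbhd U" and cpt: "compactin VH_top (VH_top closure_of (cesaro ` U))"
    by blast
  obtain S where S: "openin VH_top S" "(\<lambda>z. 0) \<in> S" "S \<subseteq> U" using U0 unfolding VH_zero_nbhd_def by blast
  obtain W where W: "VH_basic_nbhd W" "(\<lambda>g z. (\<lambda>z. 0::complex) z + g z) ` W \<subseteq> S"
    using S(1,2) unfolding openin_VH_top VH_open_def by blast
  have WU: "W \<subseteq> U" using W(2) S(3) by auto
  have "\<forall>k. \<exists>\<epsilon>>0. {g \<in> Hv k. Hv_norm k g < \<epsilon>} \<subseteq> W" using W(1) unfolding VH_basic_nbhd_def by blast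
  then obtain e where e: "\<And>k. e k > 0" "\<And>k. {g \<in> Hv k. Hv_norm k g < e k} \<subseteq> W" by metis
  define c where "c N = e N / (2 * ((real N + 11) * 6 ^ N))" for N
  have c0: "c N > 0" for N using e(1)[of N] by (simp add: c_def)
  define T where "T N = max 2 (real N / c N)" for N
  have T2: "\<forall>m. T m \<ge> 2" by (simp add: T_def)
  have Tpos: "T m > 0" for m using T2 by (metis less_le_trans zero_less_numeral)
  define r where "r m = complex_of_real (1 - exp (- T m))" for m
  define q where "q m g = norm (g (r m)) / T m ^ m" for m and g :: "complex \<Rightarrow> complex"
  define M where "M k = 1 + (\<Sum>j<k. T j ^ k)" for k
  have M1: "M k \<ge> 1" for k
  proof -
    have "(\<Sum>j<k. T j ^ k) \<ge> 0" using Tpos by (intro sum_nonneg zero_le_power) (simp add: less_imp_le)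
    thus ?thesis by (simp add: M_def)
  qed
  have qb: "q m g \<le> M k * Hv_norm k g" if "g \<in> Hv k" for g k m
    using q_bound[OF T2 that, of m] by (simp add: q_def r_def M_def)
  have q0: "q m g \<ge> 0" for m g using Tpos[of m] by (simp add: q_def)
  have qlin: "q m (\<lambda>z. a * x z + b * y z) \<le> norm a * q m x + norm b * q m y" for m a b x y
  proof -
    have "norm (a * x (r m) + b * y (r m)) \<le> norm a * norm (x (r m)) + norm b * norm (y (r m))"
      by (metis norm_mult norm_triangle_ineq)
    hence "norm (a * x (r m) + b * y (r m)) / T m ^ m \<le> (norm a * norm (x (r m)) + norm b * norm (y (r m))) / T m ^ m"
      using Tpos[of m] by (intro divide_right_mono) auto
    thus ?thesis by (simp add: q_def add_divide_distrib)
  qed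
  have qadd: "q m (\<lambda>z. x z + y z) \<le> q m x + q m y" for m x y
  proof -
    have "norm (x (r m) + y (r m)) / T m ^ m \<le> (norm (x (r m)) + norm (y (r m))) / T m ^ m"
      using Tpos[of m] by (intro divide_right_mono norm_triangle_ineq) auto
    thus ?thesis by (simp add: q_def add_divide_distrib)
  qed
  define Op where "Op n = {g \<in> VH. \<exists>B < real n. \<forall>m. q m g \<le> B}" for n :: nat
  have Oopen: "openin VH_top (Op n)" for n
  proof -
    have "VH_open (Op n)" unfolding VH_open_def
    proof (intro conjI ballI)
      show "Op n \<subseteq> VH" by (auto simp: Op_def)
      fix f assume "f \<in> Op n"
      then obtain Bf where f: "f \<in> VH" "Bf < real n" "\<forall>m. q m f \<le> Bf" by (auto simp: Op_def)
      define \<delta> where "\<delta> = real n - Bf"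
      have \<delta>0: "\<delta> > 0" using f by (simp add: \<delta>_def)
      define W' where "W' = {g \<in> VH. \<exists>B < \<delta>. \<forall>m. q m g \<le> B}"
      have "VH_basic_nbhd W'" unfolding VH_basic_nbhd_def
      proof (intro conjI ballI allI impI)
        show "W' \<subseteq> VH" by (auto simp: W'_def)
      next
        fix x y and a b :: complex
        assume x: "x \<in> W'" and y: "y \<in> W'" and ab: "norm a + norm b \<le> 1"
        obtain B1 where B1: "x \<in> VH" "B1 < \<delta>" "\<forall>m. q m x \<le> B1" using x by (auto simp: W'_def)
        obtain B2 where B2: "y \<in> VH" "B2 < \<delta>" "\<forall>m. q m y \<le> B2" using y by (auto simp: W'_def)
        have B10: "B1 \<ge> 0" using B1(3)[rule_format, of 0] q0[of 0 x] by linarith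
        have "\<forall>m. q m (\<lambda>z. a * x z + b * y z) \<le> max B1 B2"
        proof
          fix m
          have "q m (\<lambda>z. a * x z + b * y z) \<le> norm a * q m x + norm b * q m y" by (rule qlin)
          also have "\<dots> \<le> norm a * max B1 B2 + norm b * max B1 B2"
            using B1(3) B2(3) by (intro add_mono mult_left_mono) (auto intro: max.coboundedI1 max.coboundedI2)
          also have "\<dots> = (norm a + norm b) * max B1 B2" by (simp add: algebra_simps)
          also have "\<dots> \<le> 1 * max B1 B2" using ab B10 by (intro mult_right_mono) auto
          finally show "q m (\<lambda>z. a * x z + b * y z) \<le> max B1 B2" by simp
        qed
        moreover have "max B1 B2 < \<delta>" using B1 B2 by simp
        ultimately show "(\<lambda>z. a * x z + b * y z) \<in> W'" using VH_lin[OF B1(1) B2(1)] unfolding W'_def by blast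
      next
        fix k
        show "\<exists>\<epsilon>>0. {g \<in> Hv k. Hv_norm k g < \<epsilon>} \<subseteq> W'"
        proof (intro exI conjI)
          show "\<delta> / M k > 0" using \<delta>0 M1[of k] by simp
          show "{g \<in> Hv k. Hv_norm k g < \<delta> / M k} \<subseteq> W'"
          proof safe
            fix g assume g: "g \<in> Hv k" "Hv_norm k g < \<delta> / M k"
            have "M k * Hv_norm k g < \<delta>" using g(2) M1[of k] by (simp add: pos_less_divide_eq mult.commute)
            thus "g \<in> W'" using qb[OF g(1)] Hv_VH[OF g(1)] unfolding W'_def by (blast intro: order_trans)
          qed
        qed
      qed
      moreover have "(\<lambda>g z. f z + g z) ` W' \<subseteq> Op n"
      proof safe
        fix g assume "g \<in> W'"
        then obtain B where g: "g \<in> VH" "B < \<delta>" "\<forall>m. q m g \<le> B" by (auto simp: W'_def)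
        have "\<forall>m. q m (\<lambda>z. f z + g z) \<le> Bf + B"
          using qadd f(3) g(3) by (meson add_mono order_trans)
        moreover have "Bf + B < real n" using g(2) by (simp add: \<delta>_def)
        ultimately show "(\<lambda>z. f z + g z) \<in> Op n" using VH_add[OF f(1) g(1)] unfolding Op_def by blast
      qed
      ultimately show "\<exists>W. VH_basic_nbhd W \<and> (\<lambda>g z. f z + g z) ` W \<subseteq> Op n" by blast
    qed
    thus ?thesis by (simp add: openin_VH_top)
  qed
  have Ocov: "VH \<subseteq> (\<Union>n. Op n)"
  proof
    fix g assume "g \<in> VH"
    then obtain k where g: "g \<in> Hv k" unfolding VH_def by blast
    obtain n :: nat where n: "M k * Hv_norm k g < real n" using reals_Archimedean2 by blast
    have "g \<in> Op n" unfolding Op_def using qb[OF g] n Hv_VH[OF g] by blast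
    thus "g \<in> (\<Union>n. Op n)" by blast
  qed
  have Omono: "Op m \<subseteq> Op n" if "m \<le> n" for m n
  proof
    fix g assume "g \<in> Op m"
    then obtain B where "g \<in> VH" "B < real m" "\<forall>k. q k g \<le> B" by (auto simp: Op_def)
    moreover have "real m \<le> real n" using that by simp
    ultimately show "g \<in> Op n" unfolding Op_def by force
  qed
  define K where "K = VH_top closure_of (cesaro ` U)"
  have Ktop: "K \<subseteq> topspace VH_top" and Kc: "\<And>\<U>. (\<forall>V\<in>\<U>. openin VH_top V) \<and> K \<subseteq> \<Union>\<U> \<Longrightarrow> (\<exists>\<F>. finite \<F> \<and> \<F> \<subseteq> \<U> \<and> K \<subseteq> \<Union>\<F>)"
    using cpt unfolding compactin_def K_def by blast+
  have "K \<subseteq> \<Union>(range Op)" using Ktop Ocov topspace_VH by auto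
  then obtain F where F: "finite F" "F \<subseteq> range Op" "K \<subseteq> \<Union>F" using Kc[of "range Op"] Oopen by blast
  obtain A where A: "finite A" "F = Op ` A" using finite_subset_image[OF F(1) F(2)] by blast
  obtain N where N: "\<forall>a\<in>A. a \<le> N" using A(1) finite_nat_set_iff_bounded_le by blast
  have KN: "K \<subseteq> Op N" using F(3) A(2) N Omono by blast
  define g where "g = gfun (complex_of_real (c N)) N"
  have nc: "norm (complex_of_real (c N)) = c N" using c0[of N] by simp
  have gH: "g \<in> Hv N" "Hv_norm N g \<le> c N * ((real N + 11) * 6 ^ N)"
    using gfun_Hv[where c="complex_of_real (c N)" and N=N] nc by (simp_all add: g_def)
  have "c N * ((real N + 11) * 6 ^ N) = e N / 2" by (simp add: c_def)
  hence "Hv_norm N g < e N" using gH(2) e(1)[of N] by linarith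
  hence "g \<in> W" using e(2)[of N] gH(1) by blast
  hence gU: "g \<in> U" using WU by blast
  have Cg: "cesaro g = Gfun (complex_of_real (c N)) N" by (simp add: g_def cesaro_gfun)
  have "cesaro g \<in> VH" using Gfun_Hv Hv_VH Cg by metis
  hence "cesaro g \<in> K" unfolding K_def using closure_of_subset_Int[of VH_top "cesaro ` U"] topspace_VH gU by blast
  hence "cesaro g \<in> Op N" using KN by blast
  then obtain B where B: "B < real N" "\<forall>m. q m (cesaro g) \<le> B" by (auto simp: Op_def)
  have "q N (cesaro g) = c N * T N"
  proof -
    have rb: "r N \<in> ball 0 1" and Lr: "Lf (r N) = complex_of_real (T N)"
      using r_props[of "T N"] T2 by (auto simp: r_def)
    have "cesaro g (r N) = complex_of_real (c N) * complex_of_real (T N) ^ Suc N"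
      using rb Lr by (simp add: Cg Gfun_def)
    hence "norm (cesaro g (r N)) = c N * T N ^ Suc N"
      using c0[of N] Tpos[of N] by (simp add: norm_mult norm_power)
    thus ?thesis using Tpos[of N] by (simp add: q_def)
  qed
  moreover have "c N * T N \<ge> real N"
  proof -
    have "T N \<ge> real N / c N" by (simp add: T_def)
    hence "c N * T N \<ge> c N * (real N / c N)" using c0[of N] by (intro mult_left_mono) auto
    thus ?thesis using c0[of N] by simp
  qed
  ultimately show False using B(1) B(2)[rule_format, of N] by linarith
qed

end
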